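(* Let $f:\mathbb{R}\to\mathbb{R}$ be a $2\pi$-periodic $\mathcal{C}^{1}$ function with $\int_{0}^{2\pi}f(t)\,dt=0$ and such that $\int_{0}^{2\pi}f^{2}(t)\,dt=\int_{0}^{2\pi}f'^{2}(t)\,dt$. For each odd integer $n\geq 5$, let $X_{n}\in\mathbb{R}^{n}$ be the vector with components $x_{j,n}=f(\frac{2\pi}{n}j)$, $j=1,\dots,n$, and for $k=1,\dots,(n-1)/2$ let $P_{k}$ denote the orthogonal projection of $\mathbb{R}^{n}$ (with the standard inner product) onto the subspace $H_{k}$ spanned by the vectors $$e_{2k}=\sqrt{\tfrac{2}{n}}\left(1,\cos(\tfrac{2\pi}{n}k),\cos(\tfrac{2\pi}{n}2k),\dots,\cos(\tfrac{2\pi}{n}(n-1)k)\right),$$ $$e_{2k+1}=\sqrt{\tfrac{2}{n}}\left(0,\sin(\tfrac{2\pi}{n}k),\sin(\tfrac{2\pi}{n}2k),\dots,\sin(\tfrac{2\pi}{n}(n-1)k)\right).$$ Then, as $n\to\infty$ through odd integers, $$\lim_{n\to\infty}\frac{1}{n}\sum_{k=2}^{(n-1)/2}\|P_{k}(X_{n})\|^{2}= 0.$$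
   Context: Here $\|\cdot\|$ is the Euclidean norm on $\mathbb{R}^n$. The vectors $e_{2k},e_{2k+1}$ ($k=1,\dots,(n-1)/2$), together with $e_1=\frac{1}{\sqrt n}(1,\dots,1)$, form an orthonormal basis of $\mathbb{R}^n$ for odd $n$. *)

theory Defs
  imports "HOL-Analysis.Analysis"
begin

text \<open>Vectors of R^n are represented as functions nat => real, where only the
  components with index i < n matter; index i corresponds to the paper's (i+1)-th
  component.\<close>

definition vinner :: "nat \<Rightarrow> (nat \<Rightarrow> real) \<Rightarrow> (nat \<Rightarrow> real) \<Rightarrow> real" where
  "vinner n x y = (\<Sum>i<n. x i * y i)"

definition vnorm :: "nat \<Rightarrow> (nat \<Rightarrow> real) \<Rightarrow> real" where
  "vnorm n x = sqrt (vinner n x x)"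

definition span2 :: "nat \<Rightarrow> (nat \<Rightarrow> real) \<Rightarrow> (nat \<Rightarrow> real) \<Rightarrow> (nat \<Rightarrow> real) set" where
  "span2 n u v = {(\<lambda>i. if i < n then a * u i + b * v i else 0) | a b. True}"

definition orth_proj2 :: "nat \<Rightarrow> (nat \<Rightarrow> real) \<Rightarrow> (nat \<Rightarrow> real) \<Rightarrow> (nat \<Rightarrow> real) \<Rightarrow> (nat \<Rightarrow> real)" where
  "orth_proj2 n u v x = (THE p. p \<in> span2 n u v \<and>
      (\<forall>w\<in>span2 n u v. vinner n (\<lambda>i. x i - p i) w = 0))"

text \<open>Basis vectors e_{2k}, e_{2k+1} (0-based index i = paper's component i+1).\<close>
definition ecos :: "nat \<Rightarrow> nat \<Rightarrow> nat \<Rightarrow> real" where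
  "ecos n k i = sqrt (2 / real n) * cos (2 * pi / real n * real i * real k)"

definition esin :: "nat \<Rightarrow> nat \<Rightarrow> nat \<Rightarrow> real" where
  "esin n k i = sqrt (2 / real n) * sin (2 * pi / real n * real i * real k)"

definition sampleX :: "(real \<Rightarrow> real) \<Rightarrow> nat \<Rightarrow> nat \<Rightarrow> real" where
  "sampleX f n i = f (2 * pi / real n * real (i + 1))"

end

theory Submission
  imports Defs
begin

lemma sin_lb: fixes x :: real assumes "0 \<le> x" "x \<le> pi/3" shows "x/2 \<le> sin x"
proof (cases "x = 0")
  case True then show ?thesis by simp
next
  case False
  hence "0 < x" using assms by simp
  have "\<exists>l z. 0 < z \<and> z < x \<and> DERIV (\<lambda>t. sin t - t/2) z :> l \<and> (sin x - x/2) - (sin 0 - 0/2) = (x - 0) * l"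
  proof (rule MVT[OF \<open>0<x\<close>])
    show "continuous_on {0..x} (\<lambda>t. sin t - t/2)" by (auto intro!: continuous_intros)
    fix z
    have "((\<lambda>t. sin t - t/2) has_real_derivative cos z - 1/2) (at z)" by (auto intro!: derivative_eq_intros)
    thus "(\<lambda>t. sin t - t/2) differentiable (at z)" using real_differentiable_def by blast
  qed
  then obtain l z where z: "0 < z" "z < x" "DERIV (\<lambda>t. sin t - t/2) z :> l" "sin x - x/2 = x * l" by auto
  have "DERIV (\<lambda>t. sin t - t/2) z :> cos z - 1/2" by (auto intro!: derivative_eq_intros)
  with z(3) have l: "l = cos z - 1/2" using DERIV_unique by blast
  have "cos (pi/3) \<le> cos z" using z assms by (intro cos_monotone_0_pi_le) auto
  hence "l \<ge> 0" using l cos_60 by simp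
  hence "x * l \<ge> 0" using \<open>0<x\<close> by simp
  thus ?thesis using z(4) by simp
qed

lemma trig_sum:
  fixes x \<phi> :: real and n :: nat and m :: int
  assumes nx: "real n * x = 2 * pi * m" and s: "sin (x/2) \<noteq> 0"
  shows "(\<Sum>i<n. cos (real i * x + \<phi>)) = 0" "(\<Sum>i<n. sin (real i * x + \<phi>)) = 0"
proof -
  have per: "\<And>y. sin (real n * x + y) = sin y" "\<And>y. cos (real n * x + y) = cos y"
    using nx by (simp_all add: sin_add cos_add)
  have t1: "2 * sin (x/2) * cos (real i * x + \<phi>) = sin (real (Suc i) * x - x/2 + \<phi>) - sin (real i * x - x/2 + \<phi>)" for i
  proof -
    have "sin (real (Suc i) * x - x/2 + \<phi>) = sin ((real i * x + \<phi>) + x/2)" by (simp add: algebra_simps)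
    moreover have "sin (real i * x - x/2 + \<phi>) = sin ((real i * x + \<phi>) - x/2)" by (simp add: algebra_simps)
    ultimately show ?thesis by (simp add: sin_add sin_diff)
  qed
  have "2 * sin (x/2) * (\<Sum>i<n. cos (real i * x + \<phi>)) = (\<Sum>i<n. sin (real (Suc i) * x - x/2 + \<phi>) - sin (real i * x - x/2 + \<phi>))"
    by (simp add: sum_distrib_left t1)
  also have "\<dots> = sin (real n * x - x/2 + \<phi>) - sin (- x/2 + \<phi>)"
    by (subst sum_lessThan_telescope) simp
  also have "\<dots> = 0" using per(1)[of "- x/2 + \<phi>"] by (simp add: algebra_simps)
  finally show "(\<Sum>i<n. cos (real i * x + \<phi>)) = 0" using s by simp
  have t2: "2 * sin (x/2) * sin (real i * x + \<phi>) = cos (real i * x - x/2 + \<phi>) - cos (real (Suc i) * x - x/2 + \<phi>)" for i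
  proof -
    have "cos (real (Suc i) * x - x/2 + \<phi>) = cos ((real i * x + \<phi>) + x/2)" by (simp add: algebra_simps)
    moreover have "cos (real i * x - x/2 + \<phi>) = cos ((real i * x + \<phi>) - x/2)" by (simp add: algebra_simps)
    ultimately show ?thesis by (simp add: cos_add cos_diff)
  qed
  have "2 * sin (x/2) * (\<Sum>i<n. sin (real i * x + \<phi>)) = - (\<Sum>i<n. cos (real (Suc i) * x - x/2 + \<phi>) - cos (real i * x - x/2 + \<phi>))"
    by (simp add: sum_distrib_left t2 sum_negf[symmetric])
  also have "\<dots> = - (cos (real n * x - x/2 + \<phi>) - cos (- x/2 + \<phi>))"
    by (subst sum_lessThan_telescope) simp
  also have "\<dots> = 0" using per(2)[of "- x/2 + \<phi>"] by (simp add: algebra_simps)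
  finally show "(\<Sum>i<n. sin (real i * x + \<phi>)) = 0" using s by simp
qed

lemma dir0:
  fixes g g' :: "real \<Rightarrow> real"
  assumes D: "\<And>x. (g has_real_derivative g' x) (at x)"
    and C: "continuous_on UNIV g'"
    and g0: "g 0 = 0" and gpi: "g pi = 0"
  shows "integral {0..pi} (\<lambda>t. (g' t)\<^sup>2 - (g t)\<^sup>2) \<ge> 0 \<and>
    (integral {0..pi} (\<lambda>t. (g' t)\<^sup>2 - (g t)\<^sup>2) = 0 \<longrightarrow> (\<exists>A. \<forall>t\<in>{0..pi}. g t = A * sin t))"
proof -
  define F where "F = (\<lambda>t. (g' t)\<^sup>2 - (g t)\<^sup>2)"
  define R where "R = (\<lambda>t. (g' t - g t * cos t / sin t)\<^sup>2)"
  define H where "H = (\<lambda>t. (g t)\<^sup>2 * cos t / sin t)"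
  define J where "J = (\<lambda>e. integral {e..pi-e} R)"
  define I where "I = integral {0..pi} F"
  have contg: "continuous_on UNIV g"
    by (metis D DERIV_isCont continuous_at_imp_continuous_on)
  have contg': "continuous_on S g" "continuous_on S g'" for S
    using contg C continuous_on_subset by blast+
  have contF: "continuous_on S F" for S
    unfolding F_def by (intro continuous_intros contg')
  have contR: "continuous_on S R" if "\<And>t. t \<in> S \<Longrightarrow> sin t \<noteq> 0" for S
    unfolding R_def using that by (intro continuous_intros contg') auto
  have "continuous_on {0..pi} (\<lambda>t. \<bar>g' t\<bar> + \<bar>g t\<bar>)"
    by (intro continuous_intros contg')
  then obtain x0 where x0: "x0 \<in> {0..pi}" "\<And>y. y \<in> {0..pi} \<Longrightarrow> \<bar>g' y\<bar> + \<bar>g y\<bar> \<le> \<bar>g' x0\<bar> + \<bar>g x0\<bar>"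
    using continuous_attains_sup[of "{0..pi}" "\<lambda>t. \<bar>g' t\<bar> + \<bar>g t\<bar>"] by auto
  define B where "B = \<bar>g' x0\<bar> + \<bar>g x0\<bar> + 1"
  have Bpos: "B > 0" unfolding B_def by simp
  have Bg': "\<bar>g' t\<bar> \<le> B" and Bg: "\<bar>g t\<bar> \<le> B" if "t \<in> {0..pi}" for t
    using x0(2)[OF that] unfolding B_def by auto
  have Fb: "\<bar>F t\<bar> \<le> 2 * B\<^sup>2" if "t \<in> {0..pi}" for t
  proof -
    have "(g' t)\<^sup>2 \<le> B\<^sup>2" "(g t)\<^sup>2 \<le> B\<^sup>2"
      using power_mono[OF Bg'[OF that] abs_ge_zero, of 2] power_mono[OF Bg[OF that] abs_ge_zero, of 2] by auto
    thus ?thesis unfolding F_def abs_le_iff using zero_le_power2[of "g t"] zero_le_power2[of "g' t"] by (intro conjI) linarith+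
  qed
  have dw: "(g has_field_derivative g' z) (at z within {0..pi})" for z
    using D has_field_derivative_at_within by blast
  have gle1: "\<bar>g t\<bar> \<le> B * t" if "t \<in> {0..pi}" for t
  proof -
    have "norm (g t - g 0) \<le> B * norm (t - 0)"
      by (rule field_differentiable_bound[of "{0..pi}"]) (use dw Bg' that in auto)
    thus ?thesis using that g0 by simp
  qed
  have gle2: "\<bar>g t\<bar> \<le> B * (pi - t)" if "t \<in> {0..pi}" for t
  proof -
    have "norm (g t - g pi) \<le> B * norm (t - pi)"
      by (rule field_differentiable_bound[of "{0..pi}"]) (use dw Bg' that in auto)
    thus ?thesis using that gpi by simp
  qed
  have Hder: "(H has_real_derivative (F t - R t)) (at t)" if "sin t \<noteq> 0" for t
  proof -
    have "(H has_real_derivative ((2 * g t * g' t * cos t - (g t)\<^sup>2 * sin t) * sin t - (g t)\<^sup>2 * cos t * cos t) / (sin t)\<^sup>2) (at t)"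
      unfolding H_def using that
      by (auto intro!: derivative_eq_intros D simp: power2_eq_square)
    moreover have "((2 * g t * g' t * cos t - (g t)\<^sup>2 * sin t) * sin t - (g t)\<^sup>2 * cos t * cos t) / (sin t)\<^sup>2 = F t - R t"
      unfolding F_def R_def using that sin_cos_squared_add[of t]
      by (simp add: field_simps power2_eq_square)
    ultimately show ?thesis by simp
  qed
  have Hb: "\<bar>H t\<bar> \<le> 2 * B\<^sup>2 * e" if "e > 0" "sin t \<ge> e/2" "\<bar>g t\<bar> \<le> B * e" for t e
  proof -
    have st: "sin t > 0" using that by simp
    have g2: "(g t)\<^sup>2 \<le> (B * e)\<^sup>2"
      using power_mono[OF that(3) abs_ge_zero, of 2] by simp
    have "\<bar>H t\<bar> = (g t)\<^sup>2 * \<bar>cos t\<bar> / sin t" unfolding H_def using st by (simp add: abs_mult)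
    also have "\<dots> \<le> (g t)\<^sup>2 * 1 / sin t"
      using st by (intro divide_right_mono mult_left_mono) auto
    also have "\<dots> \<le> (B * e)\<^sup>2 / (e/2)"
      using g2 st that by (intro frac_le) auto
    also have "\<dots> = 2 * B\<^sup>2 * e" using that by (simp add: field_simps power2_eq_square)
    finally show ?thesis .
  qed
  have intF: "F integrable_on {a..b}" for a b by (rule integrable_continuous_interval[OF contF])
  have key: "I \<ge> J e - 8 * B\<^sup>2 * e" if e: "0 < e" "e \<le> pi/3" for e
  proof -
    have sinpos: "sin t > 0" if "t \<in> {e..pi-e}" for t using that e by (intro sin_gt_zero) auto
    have intR: "(R has_integral J e) {e..pi-e}" unfolding J_def
      by (rule integrable_integral, rule integrable_continuous_interval, rule contR) (use sinpos in force)
    have ftc: "((\<lambda>t. F t - R t) has_integral (H (pi-e) - H e)) {e..pi-e}"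
    proof (rule fundamental_theorem_of_calculus)
      show "e \<le> pi - e" using e by simp
      fix t assume "t \<in> {e..pi-e}"
      hence "sin t \<noteq> 0" using sinpos by force
      from Hder[OF this] show "(H has_vector_derivative (F t - R t)) (at t within {e..pi-e})"
        by (simp add: has_real_derivative_iff_has_vector_derivative has_vector_derivative_at_within)
    qed
    have midF: "integral {e..pi-e} F = J e + (H (pi-e) - H e)"
      using has_integral_add[OF intR ftc] by (simp add: integral_unique)
    have s1: "integral {0..e} F + integral {e..pi} F = I"
      unfolding I_def by (rule Henstock_Kurzweil_Integration.integral_combine) (use e in \<open>auto intro: intF\<close>)
    have s2: "integral {e..pi-e} F + integral {pi-e..pi} F = integral {e..pi} F"
      by (rule Henstock_Kurzweil_Integration.integral_combine) (use e in \<open>auto intro: intF\<close>)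
    have b1: "norm (integral {0..e} F) \<le> 2 * B\<^sup>2 * (e - 0)"
      by (rule integral_bound) (use e Fb in \<open>auto intro: contF\<close>)
    have b2: "norm (integral {pi-e..pi} F) \<le> 2 * B\<^sup>2 * (pi - (pi - e))"
      by (rule integral_bound) (use e Fb in \<open>auto intro: contF\<close>)
    have se: "sin e \<ge> e/2" using sin_lb[of e] e by simp
    have h1: "\<bar>H e\<bar> \<le> 2 * B\<^sup>2 * e"
      by (rule Hb) (use e se gle1[of e] in auto)
    have h2: "\<bar>H (pi - e)\<bar> \<le> 2 * B\<^sup>2 * e"
      by (rule Hb) (use e se gle2[of "pi - e"] in auto)
    show ?thesis using s1 s2 b1 b2 h1 h2 midF by simp
  qed
  have Rnn: "R t \<ge> 0" for t unfolding R_def by simp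
  have intRe: "R integrable_on {e..pi-e}" if e: "0 < e" "e \<le> pi/3" for e
  proof -
    have "sin t > 0" if "t \<in> {e..pi-e}" for t using that e by (intro sin_gt_zero) auto
    thus ?thesis by (intro integrable_continuous_interval contR) force
  qed
  have Jnn: "J e \<ge> 0" if "0 < e" "e \<le> pi/3" for e
    unfolding J_def using intRe[OF that] Rnn by (intro integral_nonneg) auto
  have B2: "B\<^sup>2 > 0" using Bpos by simp
  have part1: "I \<ge> 0"
  proof (rule ccontr)
    assume "\<not> I \<ge> 0"
    hence In: "I < 0" by simp
    define e where "e = min (pi/3) (-I/(16*B\<^sup>2))"
    have e: "0 < e" "e \<le> pi/3" unfolding e_def using In B2 by (auto simp: pi_gt_zero divide_neg_pos)
    have "e \<le> -I/(16*B\<^sup>2)" unfolding e_def by simp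
    hence "e * (16*B\<^sup>2) \<le> (-I/(16*B\<^sup>2)) * (16*B\<^sup>2)" using B2 by (intro mult_right_mono) auto
    hence "e * (16*B\<^sup>2) \<le> -I" using B2 by simp
    thus False using key[OF e] Jnn[OF e] In by (simp add: algebra_simps)
  qed
  have part2: "\<exists>A. \<forall>t\<in>{0..pi}. g t = A * sin t" if I0: "I = 0"
  proof -
    have Jz: "J e = 0" if e: "0 < e" "e \<le> pi/3" for e
    proof (rule ccontr)
      assume "J e \<noteq> 0"
      hence Jp: "J e > 0" using Jnn[OF e] by simp
      define d where "d = min e (J e/(16*B\<^sup>2))"
      have d: "0 < d" "d \<le> pi/3" "d \<le> e" unfolding d_def using Jp B2 e by auto
      have "d \<le> J e/(16*B\<^sup>2)" unfolding d_def by simp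
      hence "d * (16*B\<^sup>2) \<le> (J e/(16*B\<^sup>2)) * (16*B\<^sup>2)" using B2 by (intro mult_right_mono) auto
      hence dd: "d * (16*B\<^sup>2) \<le> J e" using B2 by simp
      have "J e \<le> J d" unfolding J_def
        by (rule integral_subset_le) (use d intRe[OF e] intRe[OF d(1,2)] Rnn in auto)
      thus False using key[OF d(1,2)] I0 dd Jp by (simp add: algebra_simps)
    qed
    have Rz: "R t = 0" if t: "0 < t" "t < pi" for t
    proof -
      define e where "e = min (pi/3) (min t (pi-t))"
      have e1: "e \<le> pi/3" "e \<le> t" "e \<le> pi - t" unfolding e_def by (rule min.cobounded1, simp_all)
      have e0: "0 < e" unfolding e_def using t by simp
      have e: "0 < e" "e \<le> pi/3" "t \<in> {e..pi-e}" using e0 e1 by auto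
      have "\<forall>x\<in>{e..pi-e}. R x = 0"
      proof (subst integral_eq_0_iff[symmetric])
        show "continuous_on {e..pi - e} R"
        proof (rule contR)
          fix x assume "x \<in> {e..pi-e}"
          hence "0 < x" "x < pi" using e by auto
          thus "sin x \<noteq> 0" using sin_gt_zero by force
        qed
        show "e < pi - e" using e by simp
        show "integral {e..pi - e} R = 0" using Jz[OF e(1,2)] unfolding J_def .
      qed (use Rnn in auto)
      thus ?thesis using e by blast
    qed
    have qd: "DERIV (\<lambda>t. g t / sin t) t :> 0" if "t \<in> {0<..<pi}" for t
    proof -
      have st: "sin t > 0" using that by (intro sin_gt_zero) auto
      have gd: "g' t = g t * cos t / sin t" using Rz[of t] that unfolding R_def by simp
      have "DERIV (\<lambda>t. g t / sin t) t :> (g' t * sin t - g t * cos t) / (sin t * sin t)"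
        using st by (auto intro!: derivative_eq_intros D)
      moreover have "(g' t * sin t - g t * cos t) = 0" using gd st by (simp add: field_simps)
      ultimately show ?thesis by simp
    qed
    have "g t = g (pi/2) * sin t" if "t \<in> {0..pi}" for t
    proof (cases "t = 0 \<or> t = pi")
      case True thus ?thesis using g0 gpi by auto
    next
      case False
      hence t: "t \<in> {0<..<pi}" using that by auto
      have "g t / sin t = g (pi/2) / sin (pi/2)"
        by (rule DERIV_isconst3[of 0 pi]) (use t qd in auto)
      moreover have "sin t > 0" using t by (intro sin_gt_zero) auto
      ultimately show ?thesis by (simp add: field_simps)
    qed
    thus ?thesis by blast
  qed
  show ?thesis using part1 part2 unfolding I_def F_def by blast
qed
lemma dira:
  fixes g g' :: "real \<Rightarrow> real"
  assumes D: "\<And>x. (g has_real_derivative g' x) (at x)"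
    and C: "continuous_on UNIV g'"
    and ga: "g a = 0" and gb: "g (a + pi) = 0"
  shows "integral {a..a+pi} (\<lambda>t. (g' t)\<^sup>2 - (g t)\<^sup>2) \<ge> 0 \<and>
    (integral {a..a+pi} (\<lambda>t. (g' t)\<^sup>2 - (g t)\<^sup>2) = 0 \<longrightarrow> (\<exists>A. \<forall>t\<in>{a..a+pi}. g t = A * sin (t - a)))"
proof -
  have D': "((\<lambda>t. g (t + a)) has_real_derivative g' (t + a)) (at t)" for t
    using D[of "t + a"] DERIV_shift by blast
  have C': "continuous_on UNIV (\<lambda>t. g' (t + a))"
    by (intro continuous_on_compose2[OF C] continuous_intros) auto
  have r: "integral {0..pi} (\<lambda>t. (g' (t + a))\<^sup>2 - (g (t + a))\<^sup>2) \<ge> 0 \<and>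
    (integral {0..pi} (\<lambda>t. (g' (t + a))\<^sup>2 - (g (t + a))\<^sup>2) = 0 \<longrightarrow> (\<exists>A. \<forall>t\<in>{0..pi}. g (t + a) = A * sin t))"
    by (rule dir0[OF D' C']) (use ga gb in \<open>simp_all add: add.commute\<close>)
  have sh: "integral {0..pi} (\<lambda>t. (g' (t + a))\<^sup>2 - (g (t + a))\<^sup>2) = integral {a..a+pi} (\<lambda>t. (g' t)\<^sup>2 - (g t)\<^sup>2)"
    using integral_shift_real_ivl[where a=a and b="a+pi" and c=a and f="\<lambda>t. (g' t)\<^sup>2 - (g t)\<^sup>2"] by simp
  have "\<exists>A. \<forall>t\<in>{a..a+pi}. g t = A * sin (t - a)" if "\<exists>A. \<forall>t\<in>{0..pi}. g (t + a) = A * sin t"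
  proof -
    from that obtain A where A: "\<forall>t\<in>{0..pi}. g (t + a) = A * sin t" by blast
    have "g t = A * sin (t - a)" if "t \<in> {a..a+pi}" for t
      using A[rule_format, of "t - a"] that by simp
    thus ?thesis by blast
  qed
  thus ?thesis using r sh by simp
qed

lemma deriv_match:
  fixes f f' :: "real \<Rightarrow> real"
  assumes D: "\<And>x. (f has_real_derivative f' x) (at x)"
    and C: "continuous_on UNIV f'" and ab: "a < b"
    and eq: "\<forall>t\<in>{a..b}. f t = c + A * sin (t - d)"
  shows "\<forall>t\<in>{a..b}. f' t = A * cos (t - d)"
proof -
  have "t \<in> {x. f' x = A * cos (x - d)}" if "t \<in> {a<..<b}" for t
  proof -
    have "((\<lambda>s. c + A * sin (s - d)) has_real_derivative f' t) (at t)"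
      by (rule has_field_derivative_transform_within_open[OF D[of t], of "{a<..<b}"]) (use that eq in auto)
    moreover have "((\<lambda>s. c + A * sin (s - d)) has_real_derivative A * cos (t - d)) (at t)"
      by (auto intro!: derivative_eq_intros)
    ultimately show ?thesis using DERIV_unique by auto
  qed
  hence sub: "{a<..<b} \<subseteq> {x. f' x = A * cos (x - d)}" by blast
  have cl: "closed {x. f' x = A * cos (x - d)}"
    by (rule closed_Collect_eq[OF C]) (intro continuous_intros)
  have "closure {a<..<b} \<subseteq> {x. f' x = A * cos (x - d)}"
    by (rule closure_minimal[OF sub cl])
  moreover have "closure {a<..<b} = {a..b}" using ab by simp
  ultimately show ?thesis by blast
qed

lemma wirt_eq:
  fixes f f' :: "real \<Rightarrow> real"
  assumes deriv: "\<And>x. (f has_real_derivative f' x) (at x)"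
    and cont_deriv: "continuous_on UNIV f'"
    and periodic: "\<And>x. f (x + 2 * pi) = f x"
    and mean_zero: "integral {0..2 * pi} f = 0"
    and wirtinger_eq: "integral {0..2 * pi} (\<lambda>t. (f t)\<^sup>2) = integral {0..2 * pi} (\<lambda>t. (f' t)\<^sup>2)"
  shows "\<exists>A t0. 0 \<le> t0 \<and> t0 \<le> pi \<and> (\<forall>t\<in>{t0..t0+2*pi}. f t = A * sin (t - t0))"
proof -
  have contf: "continuous_on UNIV f"
    by (metis deriv DERIV_isCont continuous_at_imp_continuous_on)
  have contfS: "continuous_on S f" "continuous_on S f'" for S
    using contf cont_deriv continuous_on_subset by blast+
  have perd: "f' (x + 2*pi) = f' x" for x
  proof -
    have "((\<lambda>x. f (x + 2*pi)) has_real_derivative f' (x + 2*pi)) (at x)"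
      using deriv[of "x + 2*pi"] DERIV_shift by blast
    moreover have "(\<lambda>x. f (x + 2*pi)) = f" using periodic by auto
    ultimately show ?thesis using deriv[of x] DERIV_unique by metis
  qed
  define h where "h = (\<lambda>t. f t - f (t + pi))"
  have fc: "isCont f x" for x using contf by (simp add: continuous_on_eq_continuous_at)
  have hc: "isCont h x" for x
  proof -
    have "isCont (\<lambda>x. f (x + pi)) x"
      by (rule isCont_o2[where f="\<lambda>x. x + pi" and g=f]) (auto intro: continuous_intros fc)
    thus ?thesis unfolding h_def using fc[of x] by (intro continuous_intros)
  qed
  have h0: "h pi = - h 0" unfolding h_def using periodic[of 0] by simp
  obtain t0 where t0: "0 \<le> t0" "t0 \<le> pi" "h t0 = 0"
  proof (cases "h 0 \<le> 0")
    case True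
    then obtain x where "0 \<le> x \<and> x \<le> pi \<and> h x = 0" using IVT[of h 0 0 pi] h0 hc by auto
    thus ?thesis using that by blast
  next
    case False
    then obtain x where "0 \<le> x \<and> x \<le> pi \<and> h x = 0" using IVT2[of h pi 0 0] h0 hc by auto
    thus ?thesis using that by blast
  qed
  define c where "c = f t0"
  define g where "g = (\<lambda>t. f t - c)"
  define F where "F = (\<lambda>t. (f' t)\<^sup>2 - (g t)\<^sup>2)"
  have Dg: "(g has_real_derivative f' x) (at x)" for x
    unfolding g_def using deriv[of x] by (auto intro!: derivative_eq_intros)
  have g1: "g t0 = 0" unfolding g_def c_def by simp
  have g2: "g (t0 + pi) = 0" using t0(3) unfolding g_def c_def h_def by simp
  have g3: "g (t0 + pi + pi) = 0" using periodic[of t0] unfolding g_def c_def by (simp add: add.assoc)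
  note r1 = dira[OF Dg cont_deriv g1 g2]
  note r2 = dira[OF Dg cont_deriv g2 g3]
  define I1 where "I1 = integral {t0..t0+pi} F"
  define I2 where "I2 = integral {t0+pi..t0+pi+pi} F"
  have contF: "continuous_on S F" for S unfolding F_def g_def by (intro continuous_intros contfS)
  have intF: "F integrable_on {a..b}" for a b by (rule integrable_continuous_interval[OF contF])
  have Fper: "F (x + 2*pi) = F x" for x unfolding F_def g_def using perd periodic by simp
  have "I1 + I2 = integral {t0..t0+2*pi} F"
    unfolding I1_def I2_def using Henstock_Kurzweil_Integration.integral_combine[of t0 "t0+pi" "t0+pi+pi" F] intF
    by (simp add: add.assoc)
  also have "\<dots> = integral {t0..2*pi} F + integral {2*pi..t0+2*pi} F"
    using Henstock_Kurzweil_Integration.integral_combine[of t0 "2*pi" "t0+2*pi" F] intF t0 by simp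
  also have "integral {2*pi..t0+2*pi} F = integral {0..t0} F"
  proof -
    have "integral {2*pi-2*pi..t0+2*pi-2*pi} (\<lambda>x. F (x + 2*pi)) = integral {2*pi..t0+2*pi} F"
      by (rule integral_shift_real_ivl)
    thus ?thesis using Fper by simp
  qed
  also have "integral {t0..2*pi} F + integral {0..t0} F = integral {0..2*pi} F"
    using Henstock_Kurzweil_Integration.integral_combine[of 0 t0 "2*pi" F] intF t0 by simp
  finally have sumI: "I1 + I2 = integral {0..2*pi} F" .
  have i1: "((\<lambda>t. (f' t)\<^sup>2) has_integral integral {0..2*pi} (\<lambda>t. (f' t)\<^sup>2)) {0..2*pi}"
    by (intro integrable_integral integrable_continuous_interval continuous_intros contfS)
  have i2: "((\<lambda>t. (f t)\<^sup>2) has_integral integral {0..2*pi} (\<lambda>t. (f t)\<^sup>2)) {0..2*pi}"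
    by (intro integrable_integral integrable_continuous_interval continuous_intros contfS)
  have ic: "((\<lambda>t. c\<^sup>2) has_integral (2*pi*c\<^sup>2)) {0..2*pi}"
    using has_integral_const_real[of "c\<^sup>2" 0 "2*pi"] by simp
  have i3: "(f has_integral 0) {0..2*pi}"
    using mean_zero integrable_integral[OF integrable_continuous_interval[OF contfS(1)]] by metis
  have "((\<lambda>t. ((f' t)\<^sup>2 - (f t)\<^sup>2) + (2*c) * f t - c\<^sup>2) has_integral
      ((integral {0..2*pi} (\<lambda>t. (f' t)\<^sup>2) - integral {0..2*pi} (\<lambda>t. (f t)\<^sup>2)) + (2*c) * 0 - 2*pi*c\<^sup>2)) {0..2*pi}"
    by (intro has_integral_diff has_integral_add has_integral_mult_right i1 i2 i3 ic)
  moreover have "(\<lambda>t. ((f' t)\<^sup>2 - (f t)\<^sup>2) + (2*c) * f t - c\<^sup>2) = F"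
    unfolding F_def g_def by (auto simp: power2_eq_square algebra_simps)
  ultimately have "(F has_integral (- (2*pi) * c\<^sup>2)) {0..2*pi}" using wirtinger_eq by simp
  hence sumI2: "I1 + I2 = - (2*pi) * c\<^sup>2" using sumI integral_unique by metis
  have I1nn: "I1 \<ge> 0" and I2nn: "I2 \<ge> 0" using r1 r2 unfolding I1_def I2_def F_def by auto
  have "2*pi*c\<^sup>2 \<ge> 0" by simp
  hence z: "2*pi*c\<^sup>2 = 0" and I1z: "I1 = 0" and I2z: "I2 = 0" using sumI2 I1nn I2nn by linarith+
  hence c0: "c = 0" by simp
  obtain A1 where A1: "\<forall>t\<in>{t0..t0+pi}. g t = A1 * sin (t - t0)" using r1 I1z unfolding I1_def F_def by auto
  obtain A2 where A2: "\<forall>t\<in>{t0+pi..t0+pi+pi}. g t = A2 * sin (t - (t0+pi))" using r2 I2z unfolding I2_def F_def by auto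
  have e1: "\<forall>t\<in>{t0..t0+pi}. f t = 0 + A1 * sin (t - t0)" using A1 c0 unfolding g_def by simp
  have e2: "\<forall>t\<in>{t0+pi..t0+pi+pi}. f t = 0 + A2 * sin (t - (t0+pi))" using A2 c0 unfolding g_def by simp
  have "f' (t0+pi) = A1 * cos (t0 + pi - t0)"
    using deriv_match[OF deriv cont_deriv _ e1] by simp
  moreover have "f' (t0+pi) = A2 * cos (t0 + pi - (t0+pi))"
    using deriv_match[OF deriv cont_deriv _ e2] by simp
  ultimately have A21: "A2 = - A1" by simp
  have "f t = A1 * sin (t - t0)" if "t \<in> {t0..t0+2*pi}" for t
  proof (cases "t \<le> t0 + pi")
    case True thus ?thesis using e1 that by simp
  next
    case False
    hence "f t = A2 * sin (t - (t0+pi))" using e2 that by simp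
    also have "\<dots> = A1 * sin (t - t0)" using A21
      by (simp add: sin_diff algebra_simps)
    finally show ?thesis .
  qed
  hence "\<forall>t\<in>{t0..t0+2*pi}. f t = A1 * sin (t - t0)" by blast
  thus ?thesis using t0 by blast
qed

lemma vinner_span:
  assumes w: "w \<in> span2 n u v" and xu: "vinner n x u = 0" and xv: "vinner n x v = 0"
  shows "vinner n x w = 0"
proof -
  from w obtain a b where wd: "w = (\<lambda>i. if i < n then a * u i + b * v i else 0)"
    unfolding span2_def by blast
  have "vinner n x w = (\<Sum>i<n. a * (x i * u i) + b * (x i * v i))"
    unfolding vinner_def wd by (intro sum.cong) (auto simp: algebra_simps)
  also have "\<dots> = a * vinner n x u + b * vinner n x v"
    unfolding vinner_def by (simp add: sum.distrib sum_distrib_left)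
  finally show ?thesis using xu xv by simp
qed

lemma proj_zero:
  assumes xu: "vinner n x u = 0" and xv: "vinner n x v = 0"
  shows "orth_proj2 n u v x = (\<lambda>i. 0)"
  unfolding orth_proj2_def
proof (rule the_equality)
  have "(\<lambda>i::nat. 0::real) = (\<lambda>i. if i < n then 0 * u i + 0 * v i else 0)" by auto
  hence "(\<lambda>i. 0) \<in> span2 n u v" unfolding span2_def by blast
  moreover have "\<forall>w\<in>span2 n u v. vinner n (\<lambda>i. x i - 0) w = 0"
    using vinner_span[OF _ xu xv] by simp
  ultimately show "(\<lambda>i. 0) \<in> span2 n u v \<and> (\<forall>w\<in>span2 n u v. vinner n (\<lambda>i. x i - 0) w = 0)" by blast
next
  fix p assume p: "p \<in> span2 n u v \<and> (\<forall>w\<in>span2 n u v. vinner n (\<lambda>i. x i - p i) w = 0)"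
  from p obtain a b where pd: "p = (\<lambda>i. if i < n then a * u i + b * v i else 0)"
    unfolding span2_def by blast
  have "vinner n (\<lambda>i. x i - p i) p = 0" using p by blast
  moreover have "vinner n (\<lambda>i. x i - p i) p = vinner n x p - vinner n p p"
    unfolding vinner_def by (simp add: sum_subtractf algebra_simps)
  moreover have "vinner n x p = 0" using vinner_span[OF _ xu xv] p by blast
  ultimately have "(\<Sum>i<n. p i * p i) = 0" unfolding vinner_def by simp
  hence "\<forall>i\<in>{..<n}. p i * p i = 0" by (subst sum_nonneg_eq_0_iff[symmetric]) auto
  thus "p = (\<lambda>i. 0)" using pd by (auto simp: fun_eq_iff)
qed

lemma disc_orth:
  fixes n k :: nat and \<phi> :: real
  assumes k2: "2 \<le> k" and kn: "2 * k < n"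
  shows "(\<Sum>i<n. sin (real i * (2*pi/real n) + \<phi>) * cos (2*pi/real n * real i * real k)) = 0"
    and "(\<Sum>i<n. sin (real i * (2*pi/real n) + \<phi>) * sin (2*pi/real n * real i * real k)) = 0"
proof -
  have npos: "real n > 0" using kn by simp
  have "k + 1 < n" using k2 kn by linarith
  hence kn': "real k + 1 < real n" using of_nat_less_iff[of "k+1" n] by simp
  define th where "th = 2*pi/real n"
  define x1 where "x1 = th * (real k + 1)"
  define x2 where "x2 = th * (1 - real k)"
  have n1: "real n * x1 = 2 * pi * of_int (int k + 1)" unfolding x1_def th_def using npos by simp
  have n2: "real n * x2 = 2 * pi * of_int (1 - int k)" unfolding x2_def th_def using npos by simp
  have s1: "sin (x1/2) \<noteq> 0"
  proof -
    define y where "y = (real k + 1) / real n"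
    have xy: "x1/2 = pi * y" unfolding x1_def th_def y_def by simp
    have y1: "y < 1" using kn' npos unfolding y_def by (simp add: divide_less_eq)
    have y0: "y > 0" using npos unfolding y_def by simp
    have "pi * y < pi * 1" using y1 by (intro mult_strict_left_mono) auto
    hence "0 < x1/2" "x1/2 < pi" using xy y0 by simp_all
    thus ?thesis using sin_gt_zero[of "x1/2"] by linarith
  qed
  have s2: "sin (x2/2) \<noteq> 0"
  proof -
    define y where "y = (real k - 1) / real n"
    have xy: "x2/2 = - (pi * y)" unfolding x2_def th_def y_def using npos by (simp add: field_simps)
    have y1: "y < 1" using kn' npos unfolding y_def by (simp add: divide_less_eq)
    have y0: "y > 0" using npos k2 unfolding y_def by simp
    have "pi * y < pi * 1" using y1 by (intro mult_strict_left_mono) auto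
    hence "sin (x2/2) = - sin (pi * y)" "0 < pi * y" "pi * y < pi" using xy y0 by simp_all
    thus ?thesis using sin_gt_zero[of "pi * y"] by linarith
  qed
  have a1: "real i * th + \<phi> + th * real i * real k = real i * x1 + \<phi>" for i
    unfolding x1_def by (simp add: algebra_simps)
  have a2: "real i * th + \<phi> - th * real i * real k = real i * x2 + \<phi>" for i
    unfolding x2_def by (simp add: algebra_simps)
  have pc: "sin (real i * th + \<phi>) * cos (th * real i * real k) = (sin (real i * x1 + \<phi>) + sin (real i * x2 + \<phi>)) / 2" for i
    using sin_add[of "real i * th + \<phi>" "th * real i * real k"] sin_diff[of "real i * th + \<phi>" "th * real i * real k"]
    by (simp only: a1 a2) simp
  have ps: "sin (real i * th + \<phi>) * sin (th * real i * real k) = (cos (real i * x2 + \<phi>) - cos (real i * x1 + \<phi>)) / 2" for i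
    using cos_add[of "real i * th + \<phi>" "th * real i * real k"] cos_diff[of "real i * th + \<phi>" "th * real i * real k"]
    by (simp only: a1 a2) simp
  show "(\<Sum>i<n. sin (real i * (2*pi/real n) + \<phi>) * cos (2*pi/real n * real i * real k)) = 0"
    unfolding th_def[symmetric] pc
    using trig_sum(2)[OF n1 s1, of \<phi>] trig_sum(2)[OF n2 s2, of \<phi>]
    by (simp add: sum_divide_distrib[symmetric] sum.distrib)
  show "(\<Sum>i<n. sin (real i * (2*pi/real n) + \<phi>) * sin (2*pi/real n * real i * real k)) = 0"
    unfolding th_def[symmetric] ps
    using trig_sum(1)[OF n1 s1, of \<phi>] trig_sum(1)[OF n2 s2, of \<phi>]
    by (simp add: sum_divide_distrib[symmetric] sum_subtractf)
qed

theorem lemma3p2: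
  fixes f f' :: "real \<Rightarrow> real"
  assumes deriv: "\<And>x. (f has_real_derivative f' x) (at x)"
    and cont_deriv: "continuous_on UNIV f'"
    and periodic: "\<And>x. f (x + 2 * pi) = f x"
    and mean_zero: "integral {0..2 * pi} f = 0"
    and wirtinger_eq: "integral {0..2 * pi} (\<lambda>t. (f t)\<^sup>2) = integral {0..2 * pi} (\<lambda>t. (f' t)\<^sup>2)"
  shows "(\<lambda>m. let n = 2 * m + 5 in
            (1 / real n) * (\<Sum>k = 2..(n - 1) div 2.
               (vnorm n (orth_proj2 n (ecos n k) (esin n k) (sampleX f n)))\<^sup>2))
         \<longlonglongrightarrow> 0"
proof -
  obtain A t0 where t0: "0 \<le> t0" "t0 \<le> pi" and fA: "\<forall>t\<in>{t0..t0+2*pi}. f t = A * sin (t - t0)"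
    using wirt_eq[OF deriv cont_deriv periodic mean_zero wirtinger_eq] by blast
  have fp: "f p = A * sin (p - t0)" if "0 < p" "p \<le> 2*pi" for p
  proof (cases "t0 \<le> p")
    case True thus ?thesis using fA that t0 by auto
  next
    case False
    hence "f (p + 2*pi) = A * sin (p + 2*pi - t0)" using fA that t0 by auto
    moreover have "sin (p + 2*pi - t0) = sin (p - t0)"
      using sin_periodic[of "p - t0"] by (simp add: algebra_simps)
    ultimately show ?thesis using periodic[of p] by simp
  qed
  have zero: "(\<Sum>k = 2..(n - 1) div 2. (vnorm n (orth_proj2 n (ecos n k) (esin n k) (sampleX f n)))\<^sup>2) = 0"
    if n0: "n > 0" for n :: nat
  proof (intro sum.neutral ballI)
    fix k assume k: "k \<in> {2..(n - 1) div 2}"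
    hence k2: "2 \<le> k" and kn: "2 * k < n" using n0 by auto
    define th where "th = 2 * pi / real n"
    have npos: "real n > 0" using n0 by simp
    have X: "sampleX f n i = A * sin (real i * th + (th - t0))" if "i < n" for i
    proof -
      have "0 < th * real (i + 1)" unfolding th_def using npos by simp
      moreover have "th * real (i + 1) \<le> 2 * pi"
      proof -
        have "real (i + 1) \<le> real n" using that by simp
        hence "th * real (i + 1) \<le> th * real n" unfolding th_def using npos by (intro mult_left_mono) auto
        thus ?thesis unfolding th_def using npos by simp
      qed
      ultimately have f1: "f (th * real (i + 1)) = A * sin (th * real (i + 1) - t0)" using fp by blast
      have e: "th * real (i + 1) - t0 = real i * th + (th - t0)" by (simp add: algebra_simps)
      have "sampleX f n i = A * sin (th * real (i + 1) - t0)"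
        unfolding sampleX_def th_def[symmetric] by (rule f1)
      thus ?thesis unfolding e .
    qed
    have c: "vinner n (sampleX f n) (ecos n k) = 0"
    proof -
      have "vinner n (sampleX f n) (ecos n k) = (A * sqrt (2 / real n)) *
          (\<Sum>i<n. sin (real i * (2*pi/real n) + (th - t0)) * cos (2*pi/real n * real i * real k))"
        unfolding vinner_def ecos_def sum_distrib_left
        by (intro sum.cong refl) (simp add: X th_def)
      thus ?thesis using disc_orth(1)[OF k2 kn, of "th - t0"] by simp
    qed
    have s: "vinner n (sampleX f n) (esin n k) = 0"
    proof -
      have "vinner n (sampleX f n) (esin n k) = (A * sqrt (2 / real n)) *
          (\<Sum>i<n. sin (real i * (2*pi/real n) + (th - t0)) * sin (2*pi/real n * real i * real k))"
        unfolding vinner_def esin_def sum_distrib_left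
        by (intro sum.cong refl) (simp add: X th_def)
      thus ?thesis using disc_orth(2)[OF k2 kn, of "th - t0"] by simp
    qed
    show "(vnorm n (orth_proj2 n (ecos n k) (esin n k) (sampleX f n)))\<^sup>2 = 0"
      unfolding proj_zero[OF c s] vnorm_def vinner_def by simp
  qed
  have "(\<lambda>m. let n = 2 * m + 5 in
            (1 / real n) * (\<Sum>k = 2..(n - 1) div 2.
               (vnorm n (orth_proj2 n (ecos n k) (esin n k) (sampleX f n)))\<^sup>2)) = (\<lambda>m. 0)"
  proof (rule ext)
    fix m :: nat
    have z: "(\<Sum>k = 2..(2 * m + 5 - 1) div 2. (vnorm (2 * m + 5) (orth_proj2 (2 * m + 5) (ecos (2 * m + 5) k) (esin (2 * m + 5) k) (sampleX f (2 * m + 5))))\<^sup>2) = 0"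
      by (rule zero) simp
    show "(let n = 2 * m + 5 in
            (1 / real n) * (\<Sum>k = 2..(n - 1) div 2.
               (vnorm n (orth_proj2 n (ecos n k) (esin n k) (sampleX f n)))\<^sup>2)) = 0"
      unfolding Let_def z by simp
  qed
  thus ?thesis by simp
qed

end
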